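(* Let $\varrho>1$ and $\widetilde{\sigma}_e^2>0$, and put $\check{x}=\widetilde{\sigma}_e^2/\varrho$, $\hat{x}=\varrho\,\widetilde{\sigma}_e^2$. Let $\sigma_e^2$ be a random variable with probability density $f_{\sigma_e^2}(x)=\frac{1}{2x\ln(\varrho)}$ for $x\in[\check{x},\hat{x}]$ (and $0$ otherwise). Let $P_0>0$, $\eta>0$, $\kappa\in(0,1)$, $\zeta\in(0,1]$, $\alpha>0$, let $d_{p_T}^e,d_{p_T}^b,d_b^e>0$ and $g_b^e\in\mathbb{C}$ be fixed, and set $$|h_{f_T}^b|^2=\eta\,(d_{p_T}^b)^{-2},\qquad |h_b^e|^2=\eta\,(d_b^e)^{-\alpha}|g_b^e|^2,$$ $$\Delta_1=P_0\,\eta\,(d_{p_T}^e)^{-2},\qquad \Delta_2=\Delta_1+\zeta\kappa P_0\,|h_{f_T}^b|^2|h_b^e|^2 .$$ For a threshold $\Gamma_{\text{th}}\in\mathbb{R}$ define the false-alarm probability $\mathcal{P}_f(\Gamma_{\text{th}})=\mathbb{P}(\Delta_1+\sigma_e^2\ge\Gamma_{\text{th}})$, the miss-detection probability $\mathcal{P}_m(\Gamma_{\text{th}})=\mathbb{P}(\Delta_2+\sigma_e^2\le\Gamma_{\text{th}})$, and the total detection error probability $\mathcal{P}_{\text{total}}(\Gamma_{\text{th}})=\mathcal{P}_f(\Gamma_{\text{th}})+\mathcal{P}_m(\Gamma_{\text{th}})$. Assume $\Delta_2-\Delta_1\le\hat{x}-\check{x}$. Then $\Gamma_{\text{th}}^*=\check{x}+\Delta_2$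 minimizes $\mathcal{P}_{\text{total}}$ over $\Gamma_{\text{th}}\in\mathbb{R}$, and the minimum value is $$\mathcal{P}_{\text{total}}^*=\frac{1}{2\ln(\varrho)}\ln\!\left(\frac{\hat{x}}{\check{x}+\zeta\kappa P_0\,|h_{f_T}^b|^2\,|h_b^e|^2}\right).$$
   Context: This models an eavesdropper performing energy detection: it compares its received power $\Delta_i+\sigma_e^2$ ($i=1$ under the hypothesis that the backscatter device is silent, $i=2$ when it transmits) with a threshold $\Gamma_{\text{th}}$. The noise power $\sigma_e^2$ is uncertain: in dB it is uniform on $[\widetilde{\sigma}^2_{e,\text{dB}}-\varrho_{\text{dB}},\widetilde{\sigma}^2_{e,\text{dB}}+\varrho_{\text{dB}}]$, which gives the stated density on $[\check{x},\hat{x}]$. Here $\zeta$ is the backscattering efficiency, $\kappa$ the reflected power fraction, $P_0$ the transmit power, $\eta$ the reference path loss, $d$'s are distances, $\alpha$ the path-loss exponent and $g_b^e$ the small-scale fading coefficient of the device-to-eavesdropper link. *)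

theory Defs
  imports "HOL-Probability.Probability"
begin

definition noise_density :: "real \<Rightarrow> real \<Rightarrow> real \<Rightarrow> real" where
  "noise_density rho s x = (if s / rho \<le> x \<and> x \<le> rho * s then 1 / (2 * x * ln rho) else 0)"

definition P_f :: "'a measure \<Rightarrow> ('a \<Rightarrow> real) \<Rightarrow> real \<Rightarrow> real \<Rightarrow> real" where
  "P_f M X D1 \<Gamma> = measure M {\<omega> \<in> space M. D1 + X \<omega> \<ge> \<Gamma>}"

definition P_m :: "'a measure \<Rightarrow> ('a \<Rightarrow> real) \<Rightarrow> real \<Rightarrow> real \<Rightarrow> real" where
  "P_m M X D2 \<Gamma> = measure M {\<omega> \<in> space M. D2 + X \<omega> \<le> \<Gamma>}"

definition P_total :: "'a measure \<Rightarrow> ('a \<Rightarrow> real) \<Rightarrow> real \<Rightarrow> real \<Rightarrow> real \<Rightarrow> real" where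
  "P_total M X D1 D2 \<Gamma> = P_f M X D1 \<Gamma> + P_m M X D2 \<Gamma>"

end

theory Submission
  imports Defs
begin

lemma prob_X:
  assumes "distributed M lborel X f" "A \<in> sets borel"
  shows "measure M {\<omega>\<in>space M. X \<omega> \<in> A} = enn2real (\<integral>\<^sup>+x. f x * indicator A x \<partial>lborel)"
proof -
  have d: "distr M lborel X = density lborel f" "f \<in> borel_measurable lborel" "X \<in> measurable M lborel"
    using assms(1) unfolding distributed_def by auto
  have "{\<omega>\<in>space M. X \<omega> \<in> A} = X -` A \<inter> space M" by auto
  then have "measure M {\<omega>\<in>space M. X \<omega> \<in> A} = measure (distr M lborel X) A"
    using measure_distr[OF d(3)] assms(2) by simp
  also have "\<dots> = enn2real (emeasure (density lborel f) A)" using d(1) by (simp add: measure_def)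
  also have "\<dots> = enn2real (\<integral>\<^sup>+x. f x * indicator A x \<partial>lborel)"
    using emeasure_density[OF d(2)] assms(2) by simp
  finally show ?thesis .
qed

lemma int_interval:
  fixes L p q :: real
  assumes "0 < p" "p \<le> q" "L > 0"
  shows "(\<integral>\<^sup>+x. ennreal (1 / (2 * x * L)) * indicator {p..q} x \<partial>lborel) = ennreal ((ln q - ln p) / (2 * L))"
proof -
  have "((\<lambda>x. 1 / (2 * x * L)) has_integral (ln q / (2*L) - ln p / (2*L))) {p..q}"
  proof (rule fundamental_theorem_of_calculus[OF assms(2)])
    fix x assume "x \<in> {p..q}"
    then have "x > 0" using assms by auto
    have "((\<lambda>x. ln x / (2*L)) has_real_derivative inverse x / (2*L)) (at x within {p..q})"
      by (rule has_field_derivative_at_within[OF DERIV_cdivide[OF DERIV_ln[OF \<open>x>0\<close>]]])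
    then show "((\<lambda>x. ln x / (2*L)) has_vector_derivative 1 / (2 * x * L)) (at x within {p..q})"
      using has_real_derivative_iff_has_vector_derivative by (simp add: field_simps)
  qed
  then have "((\<lambda>x. 1 / (2 * x * L)) has_integral ((ln q - ln p) / (2*L))) {p..q}"
    by (simp add: diff_divide_distrib)
  note I = this
  show ?thesis
    using assms by (intro nn_integral_has_integral_lebesgue'[OF _ I]) auto
qed

lemma key_ineq:
  fixes a b c t D :: real
  assumes a: "0 < a" and ab: "a < b" and c: "0 \<le> c" "c \<le> b - a" and D: "D > 0"
  shows "(ln b - ln (a + c)) / D \<le>
     (if b < t + c then 0 else (ln b - ln (max (t + c) a)) / D) +
     (if t < a then 0 else (ln (min t b) - ln a) / D)"
proof -
  have "ln b - ln (a + c) \<le>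
     (if b < t + c then 0 else (ln b - ln (max (t + c) a))) +
     (if t < a then 0 else (ln (min t b) - ln a))"
  proof (cases "t < a")
    case True
    then have "\<not> b < t + c" using c by linarith
    moreover have "ln (max (t + c) a) \<le> ln (a + c)"
      using True a c by (subst ln_le_cancel_iff) auto
    ultimately show ?thesis using True by simp
  next
    case False
    show ?thesis
    proof (cases "b < t + c")
      case True
      have m: "min t b > 0" using False a ab by simp
      have "b * a \<le> min t b * (a + c)"
      proof (cases "t \<le> b")
        case True2: True
        have "t * (a + c) - b * a = a * (t + c - b) + (t - a) * c" by (simp add: algebra_simps)
        also have "\<dots> \<ge> 0" using True False a c by (intro add_nonneg_nonneg mult_nonneg_nonneg) auto
        finally show ?thesis using True2 by simp
      next
        case False2: False
        then show ?thesis using a c ab by (simp add: algebra_simps)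
      qed
      then have "ln (b * a) \<le> ln (min t b * (a + c))"
        using a ab m c by (subst ln_le_cancel_iff) (auto intro: mult_pos_pos)
      then have "ln b + ln a \<le> ln (min t b) + ln (a + c)"
        using a ab m c by (simp add: ln_mult)
      then show ?thesis using True False by simp
    next
      case False2: False
      have t: "t \<le> b" "a \<le> t" using False False2 c by auto
      have "(t + c) * a \<le> (a + c) * t" using t c mult_right_mono[of a t c] by (simp add: algebra_simps)
      then have "ln ((t + c) * a) \<le> ln ((a + c) * t)"
        using a c t by (subst ln_le_cancel_iff) auto
      then have "ln (t + c) + ln a \<le> ln (a + c) + ln t"
        using a c t by (simp add: ln_mult)
      moreover have "max (t + c) a = t + c" "min t b = t" using t c by auto
      ultimately show ?thesis using False False2 by simp
    qed
  qed
  then have "(ln b - ln (a + c)) / D \<le> ((if b < t + c then 0 else (ln b - ln (max (t + c) a))) +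
     (if t < a then 0 else (ln (min t b) - ln a))) / D" using D by (rule divide_right_mono[OF _ less_imp_le])
  then show ?thesis by (auto simp add: add_divide_distrib split: if_splits)
qed
theorem lemma1:
  fixes M :: "'a measure" and X :: "'a \<Rightarrow> real"
    and rho s P0 \<eta> \<kappa> \<zeta> \<alpha> d_pe d_pb d_be h_fb h_be D1 D2 :: real and g :: complex
  assumes "prob_space M"
    and "rho > 1" and "s > 0"
    and "distributed M lborel X (\<lambda>x. ennreal (noise_density rho s x))"
    and "P0 > 0" and "\<eta> > 0" and "0 < \<kappa>" and "\<kappa> < 1" and "0 < \<zeta>" and "\<zeta> \<le> 1"
    and "\<alpha> > 0" and "d_pe > 0" and "d_pb > 0" and "d_be > 0"
  assumes "h_fb = \<eta> * d_pb powr (-2)"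
    and "h_be = \<eta> * d_be powr (-\<alpha>) * (cmod g)\<^sup>2"
    and "D1 = P0 * \<eta> * d_pe powr (-2)"
    and "D2 = D1 + \<zeta> * \<kappa> * P0 * h_fb * h_be"
    and "D2 - D1 \<le> rho * s - s / rho"
  shows "(\<forall>\<Gamma>::real. P_total M X D1 D2 (s / rho + D2) \<le> P_total M X D1 D2 \<Gamma>)
         \<and> P_total M X D1 D2 (s / rho + D2)
             = 1 / (2 * ln rho) * ln ((rho * s) / (s / rho + \<zeta> * \<kappa> * P0 * h_fb * h_be))"
  proof -
  define a where "a = s / rho"
  define b where "b = rho * s"
  define L where "L = ln rho"
  define c where "c = \<zeta> * \<kappa> * P0 * h_fb * h_be"
  define f where "f = (\<lambda>x. ennreal (noise_density rho s x))"
  have rho: "rho > 1" and s: "s > 0" using assms(2,3) by auto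
  have a0: "a > 0" unfolding a_def using rho s by simp
  have ab: "a < b" unfolding a_def b_def using rho s
    by (simp add: divide_less_eq) (metis less_1_mult mult.commute)
  have L0: "L > 0" unfolding L_def using rho by simp
  have bal: "ln b - ln a = 2 * L"
  proof -
    have "ln b = ln rho + ln s" "ln a = ln s - ln rho"
      unfolding a_def b_def using rho s by (simp_all add: ln_mult ln_div)
    then show ?thesis unfolding L_def by simp
  qed
  have hfb: "h_fb > 0" using assms(6,13,15) by simp
  have hbe: "h_be \<ge> 0" using assms(6,16) by simp
  have c0: "c \<ge> 0" unfolding c_def using assms(5,7,9) hfb hbe by simp
  have cle: "c \<le> b - a" unfolding c_def a_def b_def using assms(18,19) by simp
  have D2: "D2 = D1 + c" unfolding c_def using assms(18) by simp
  have dist: "distributed M lborel X f" unfolding f_def using assms(4) by simp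
  have nd: "noise_density rho s x = (if a \<le> x \<and> x \<le> b then 1 / (2 * x * L) else 0)" for x
    unfolding noise_density_def a_def b_def L_def by simp
  have Fm: "measure M {\<omega>\<in>space M. X \<omega> \<in> {..y}} = (if y < a then 0 else (ln (min y b) - ln a) / (2 * L))" for y
  proof (cases "y < a")
    case True
    have "(\<lambda>x. f x * indicator {..y} x) = (\<lambda>x. 0)"
      using True by (auto simp: f_def nd indicator_def fun_eq_iff)
    then show ?thesis using prob_X[OF dist, of "{..y}"] True by simp
  next
    case False
    have "(\<lambda>x. f x * indicator {..y} x) = (\<lambda>x. ennreal (1 / (2 * x * L)) * indicator {a..min y b} x)"
      using False by (auto simp: f_def nd indicator_def fun_eq_iff)
    moreover have "a \<le> min y b" using False ab by simp
    ultimately show ?thesis using prob_X[OF dist, of "{..y}"] int_interval[OF a0 _ L0, of "min y b"] False L0 a0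
      by (simp add: divide_nonneg_pos)
  qed
  have Fp: "measure M {\<omega>\<in>space M. X \<omega> \<in> {y..}} = (if b < y then 0 else (ln b - ln (max y a)) / (2 * L))" for y
  proof (cases "b < y")
    case True
    have "(\<lambda>x. f x * indicator {y..} x) = (\<lambda>x. 0)"
      using True by (auto simp: f_def nd indicator_def fun_eq_iff)
    then show ?thesis using prob_X[OF dist, of "{y..}"] True by simp
  next
    case False
    have "(\<lambda>x. f x * indicator {y..} x) = (\<lambda>x. ennreal (1 / (2 * x * L)) * indicator {max y a..b} x)"
      using False by (auto simp: f_def nd indicator_def fun_eq_iff)
    moreover have "max y a \<le> b" "max y a > 0" using False ab a0 by auto
    ultimately show ?thesis using prob_X[OF dist, of "{y..}"] int_interval[of "max y a" b L] False L0 a0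
      by (simp add: divide_nonneg_pos)
  qed
  have PT: "P_total M X D1 D2 G =
     (if b < (G - D2) + c then 0 else (ln b - ln (max ((G - D2) + c) a)) / (2 * L)) +
     (if (G - D2) < a then 0 else (ln (min (G - D2) b) - ln a) / (2 * L))" for G
  proof -
    have e1: "{\<omega>\<in>space M. D1 + X \<omega> \<ge> G} = {\<omega>\<in>space M. X \<omega> \<in> {(G - D2) + c..}}"
      using D2 by auto
    have e2: "{\<omega>\<in>space M. D2 + X \<omega> \<le> G} = {\<omega>\<in>space M. X \<omega> \<in> {..G - D2}}"
      by auto
    show ?thesis unfolding P_total_def P_f_def P_m_def by (simp only: e1 e2 Fm Fp)
  qed
  have val: "P_total M X D1 D2 (s / rho + D2) = (ln b - ln (a + c)) / (2 * L)"
    unfolding PT using cle c0 ab by (simp add: a_def[symmetric] max_def min_def)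
  have val2: "(ln b - ln (a + c)) / (2 * L) = 1 / (2 * ln rho) * ln ((rho * s) / (s / rho + \<zeta> * \<kappa> * P0 * h_fb * h_be))"
    using a0 c0 ab unfolding L_def a_def[symmetric] b_def[symmetric] c_def[symmetric]
    by (simp add: ln_div)
  show ?thesis
  proof
    show "\<forall>G. P_total M X D1 D2 (s / rho + D2) \<le> P_total M X D1 D2 G"
    proof
      fix G
      show "P_total M X D1 D2 (s / rho + D2) \<le> P_total M X D1 D2 G"
        unfolding val PT[of G] using key_ineq[OF a0 ab c0 cle, of "2 * L" "G - D2"] L0 by simp
    qed
    show "P_total M X D1 D2 (s / rho + D2) = 1 / (2 * ln rho) * ln ((rho * s) / (s / rho + \<zeta> * \<kappa> * P0 * h_fb * h_be))"
      using val val2 by simp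
  qed
qed

end
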